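(* Let $\pi$ be an algorithmic policy mapping the prediction matrix $\mathbf G=(g_l(X_i))_{i,l}$ to an assignment satisfying the capacity constraints, and suppose that for $P^{\mathcal M}$-almost every realization $(\mathbf x,\mathbf y,\mathbf l)$ of $(\mathbf X,\mathbf Y,\mathbf L)$ we have $\pi(\mathbf g)\in\Pi_{\mathbf x,\mathbf y,\mathbf l}$, where $\mathbf g=(g_l(x_i))$. Then $$\mathbb E_{\mathbf Y\sim P^{\mathcal M;\,do(\mathbf L=\pi(\mathbf G))}}[\mathbf 1^T\mathbf Y]\ \ge\ \mathbb E_{\mathbf Y\sim P^{\mathcal M}}[\mathbf 1^T\mathbf Y],$$ i.e. $\pi$ achieves at least the expected utility of the default policy $\tilde\pi$.
   Context: Setup (structural causal model $\mathcal M$ of a resettlement process). A pool $\mathcal I$ of $n$ refugees is matched to a finite set $\mathcal L$ of $k$ locations, location $l$ having capacity $c_l\in\mathbb N$. Exogenous noise variables $D_i\sim P(D)$ ($i\in\mathcal I$), $V_{i,l}\sim P(V\mid L=l)$ ($i\in\mathcal I,l\in\mathcal L$) and $W\sim P(W)$ are all mutually independent. Endogenous variables: $X_i=f_X(D_i)$, $\mathbf L=\tilde\pi(\mathbf X,W)\in\mathcal L^n$ (default policy $\tilde\pi$), $Y_i=f_Y(D_i,V_{i,L_i})\in\{0,1\}$, $U=\mathbf 1^T\mathbf Y$. A classifier gives maps $g_l:\mathcal X\to[0,1]$. An assignment is a map $\pi:\mathcal I\to\mathcal L$ with $|\{i:\pi_i=l\}|\le c_l$. $\Pi_{\mathbf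 x,\mathbf y,\mathbf l}$ is the set of assignments $\pi$ with $\pi_i=l_i$ for all $i$ with $y_i=1$. The interventional distribution $P^{\mathcal M;do(\mathbf L=\pi(\mathbf G))}$ is obtained by drawing fresh noise, setting $X_i=f_X(D_i)$, $\mathbf G=(g_l(X_i))$, $\mathbf L=\pi(\mathbf G)$, $Y_i=f_Y(D_i,V_{i,L_i})$. *)

theory Defs
  imports "HOL-Probability.Probability"
begin

text \<open>Refugees are indexed by a finite type 'i, locations by a finite type 'l.
  A noise realisation is a triple (d, v, w) with d i = D_i, v (i,l) = V_{i,l}, w = W.\<close>

type_synonym ('i, 'l, 'd, 'v, 'w) noise = "('i \<Rightarrow> 'd) \<times> (('i \<times> 'l) \<Rightarrow> 'v) \<times> 'w"

definition noise_measure ::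
  "'d measure \<Rightarrow> ('l \<Rightarrow> 'v measure) \<Rightarrow> 'w measure \<Rightarrow> ('i, 'l, 'd, 'v, 'w) noise measure" where
  "noise_measure PD PV PW =
     (PiM UNIV (\<lambda>i. PD)) \<Otimes>\<^sub>M ((PiM UNIV (\<lambda>il. PV (snd il))) \<Otimes>\<^sub>M PW)"

definition Xvar :: "('d \<Rightarrow> 'x) \<Rightarrow> ('i, 'l, 'd, 'v, 'w) noise \<Rightarrow> 'i \<Rightarrow> 'x" where
  "Xvar fX \<omega> i = fX (fst \<omega> i)"

definition Lvar :: "('d \<Rightarrow> 'x) \<Rightarrow> (('i \<Rightarrow> 'x) \<Rightarrow> 'w \<Rightarrow> ('i \<Rightarrow> 'l))
                      \<Rightarrow> ('i, 'l, 'd, 'v, 'w) noise \<Rightarrow> 'i \<Rightarrow> 'l" where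
  "Lvar fX pdef \<omega> = pdef (Xvar fX \<omega>) (snd (snd \<omega>))"

definition Yvar :: "('d \<Rightarrow> 'v \<Rightarrow> bool) \<Rightarrow> ('i \<Rightarrow> 'l)
                      \<Rightarrow> ('i, 'l, 'd, 'v, 'w) noise \<Rightarrow> 'i \<Rightarrow> bool" where
  "Yvar fY asg \<omega> i = fY (fst \<omega> i) (fst (snd \<omega>) (i, asg i))"

definition utility :: "('i::finite \<Rightarrow> bool) \<Rightarrow> real" where
  "utility y = (\<Sum>i\<in>UNIV. of_bool (y i))"

definition pred_matrix :: "('l \<Rightarrow> 'x \<Rightarrow> real) \<Rightarrow> ('i \<Rightarrow> 'x) \<Rightarrow> 'i \<Rightarrow> 'l \<Rightarrow> real" where
  "pred_matrix g x = (\<lambda>i l. g l (x i))"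

definition feasible :: "('l \<Rightarrow> nat) \<Rightarrow> ('i::finite \<Rightarrow> 'l) \<Rightarrow> bool" where
  "feasible c p \<longleftrightarrow> (\<forall>l. card {i. p i = l} \<le> c l)"

definition Pi_set :: "('l \<Rightarrow> nat) \<Rightarrow> ('i::finite \<Rightarrow> 'x) \<Rightarrow> ('i \<Rightarrow> bool) \<Rightarrow> ('i \<Rightarrow> 'l)
                        \<Rightarrow> ('i \<Rightarrow> 'l) set" where
  "Pi_set c x y l0 = {p. feasible c p \<and> (\<forall>i. y i \<longrightarrow> p i = l0 i)}"

end

theory Submission
  imports Defs
begin

theorem mainTheorem3:
  fixes PD :: "'d measure" and PV :: "'l::finite \<Rightarrow> 'v measure" and PW :: "'w measure"
    and MV :: "'v measure" and MX :: "'x measure"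
    and fX :: "'d \<Rightarrow> 'x" and fY :: "'d \<Rightarrow> 'v \<Rightarrow> bool"
    and pdef :: "('i::finite \<Rightarrow> 'x) \<Rightarrow> 'w \<Rightarrow> ('i \<Rightarrow> 'l)"
    and g :: "'l \<Rightarrow> 'x \<Rightarrow> real"
    and pol :: "('i \<Rightarrow> 'l \<Rightarrow> real) \<Rightarrow> ('i \<Rightarrow> 'l)"
    and c :: "'l \<Rightarrow> nat"
  assumes PD: "prob_space PD"
    and PV: "\<And>l. prob_space (PV l)" and PV_sets: "\<And>l. sets (PV l) = sets MV"
    and PW: "prob_space PW"
    and fX_meas: "fX \<in> PD \<rightarrow>\<^sub>M MX"
    and fY_meas: "(\<lambda>(d, v). fY d v) \<in> PD \<Otimes>\<^sub>M MV \<rightarrow>\<^sub>M count_space UNIV"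
    and pdef_meas: "(\<lambda>(x, w). pdef x w) \<in> (PiM UNIV (\<lambda>i. MX)) \<Otimes>\<^sub>M PW \<rightarrow>\<^sub>M count_space UNIV"
    and g_meas: "\<And>l. g l \<in> borel_measurable MX"
    and g_range: "\<And>l x. 0 \<le> g l x \<and> g l x \<le> 1"
    and pol_meas: "pol \<in> PiM UNIV (\<lambda>i. PiM UNIV (\<lambda>l. borel)) \<rightarrow>\<^sub>M count_space UNIV"
    and pol_feasible: "\<And>G. feasible c (pol G)"
    and pol_in_Pi: "AE \<omega> in noise_measure PD PV PW.
           pol (pred_matrix g (Xvar fX \<omega>))
             \<in> Pi_set c (Xvar fX \<omega>) (Yvar fY (Lvar fX pdef \<omega>) \<omega>) (Lvar fX pdef \<omega>)"
  shows "(\<integral>\<omega>. utility (Yvar fY (pol (pred_matrix g (Xvar fX \<omega>))) \<omega>) \<partial>noise_measure PD PV PW)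
         \<ge> (\<integral>\<omega>. utility (Yvar fY (Lvar fX pdef \<omega>) \<omega>) \<partial>noise_measure PD PV PW)"
proof -
  define N :: "('i,'l,'d,'v,'w) noise measure" where "N = noise_measure PD PV PW"
  have N_def': "N = (PiM UNIV (\<lambda>i. PD)) \<Otimes>\<^sub>M ((PiM UNIV (\<lambda>il. PV (snd il))) \<Otimes>\<^sub>M PW)"
    by (simp add: N_def noise_measure_def)
  interpret PDp: prob_space PD by (rule PD)
  interpret PWp: prob_space PW by (rule PW)
  have p1: "prob_space (PiM (UNIV::'i::finite set) (\<lambda>i. PD))"
    by (rule prob_space_PiM) (simp add: PD)
  have p2: "prob_space (PiM (UNIV::('i::finite\<times>'l::finite) set) (\<lambda>il. PV (snd il)))"
    by (rule prob_space_PiM) (simp add: PV)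
  interpret P1: prob_space "PiM (UNIV::'i::finite set) (\<lambda>i. PD)" by (rule p1)
  interpret P2: prob_space "PiM (UNIV::('i::finite\<times>'l::finite) set) (\<lambda>il. PV (snd il))" by (rule p2)
  interpret P23: pair_prob_space "PiM (UNIV::('i::finite\<times>'l::finite) set) (\<lambda>il. PV (snd il))" PW ..
  have p3: "prob_space ((PiM (UNIV::('i::finite\<times>'l::finite) set) (\<lambda>il. PV (snd il))) \<Otimes>\<^sub>M PW)"
    by (rule P23.P.prob_space_axioms)
  interpret P3: prob_space "(PiM (UNIV::('i::finite\<times>'l::finite) set) (\<lambda>il. PV (snd il))) \<Otimes>\<^sub>M PW" by (rule p3)
  interpret P123: pair_prob_space "PiM (UNIV::'i::finite set) (\<lambda>i. PD)" "(PiM (UNIV::('i::finite\<times>'l::finite) set) (\<lambda>il. PV (snd il))) \<Otimes>\<^sub>M PW" ..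
  interpret NP: prob_space N unfolding N_def' by (intro prob_space_pair prob_space_PiM PD PV PW)
  have d_meas: "(\<lambda>\<omega>. fst \<omega> i) \<in> N \<rightarrow>\<^sub>M PD" for i
    unfolding N_def' by measurable
  have v_meas: "(\<lambda>\<omega>. fst (snd \<omega>) (i, l)) \<in> N \<rightarrow>\<^sub>M MV" for i l
  proof -
    have "(\<lambda>\<omega>. fst (snd \<omega>) (i, l)) \<in> N \<rightarrow>\<^sub>M PV (snd (i, l))"
      unfolding N_def' by measurable
    then show ?thesis using measurable_cong_sets[OF refl PV_sets[of l], of N] by simp
  qed
  have w_meas: "(\<lambda>\<omega>. snd (snd \<omega>)) \<in> N \<rightarrow>\<^sub>M PW"
    unfolding N_def' by measurable
  have X_meas: "Xvar fX \<in> N \<rightarrow>\<^sub>M PiM UNIV (\<lambda>i. MX)"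
  proof (rule measurable_PiM_single')
    fix i show "(\<lambda>\<omega>. Xvar fX \<omega> i) \<in> N \<rightarrow>\<^sub>M MX"
      unfolding Xvar_def using measurable_comp[OF d_meas fX_meas] by (simp add: comp_def)
  next
    show "Xvar fX \<in> space N \<rightarrow> (\<Pi>\<^sub>E i\<in>UNIV. space MX)"
      using measurable_space[OF measurable_comp[OF d_meas fX_meas]]
      by (auto simp: Xvar_def comp_def)
  qed
  have G_meas: "(\<lambda>\<omega>. pred_matrix g (Xvar fX \<omega>)) \<in> N \<rightarrow>\<^sub>M PiM UNIV (\<lambda>i. PiM UNIV (\<lambda>l. borel))"
  proof (rule measurable_PiM_single')
    fix i show "(\<lambda>\<omega>. pred_matrix g (Xvar fX \<omega>) i) \<in> N \<rightarrow>\<^sub>M PiM UNIV (\<lambda>l. borel)"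
    proof (rule measurable_PiM_single')
      fix l
      have "(\<lambda>\<omega>. Xvar fX \<omega> i) \<in> N \<rightarrow>\<^sub>M MX"
        using measurable_comp[OF X_meas measurable_component_singleton[of i UNIV "\<lambda>i. MX"]]
        by (simp add: comp_def)
      from measurable_comp[OF this g_meas[of l]]
      show "(\<lambda>\<omega>. pred_matrix g (Xvar fX \<omega>) i l) \<in> borel_measurable N"
        by (simp add: comp_def pred_matrix_def)
    qed auto
  qed (auto simp: space_PiM)
  have A1: "(\<lambda>\<omega>. pol (pred_matrix g (Xvar fX \<omega>))) \<in> N \<rightarrow>\<^sub>M count_space UNIV"
    using measurable_comp[OF G_meas pol_meas] by (simp add: comp_def)
  have A2: "Lvar fX pdef \<in> N \<rightarrow>\<^sub>M count_space UNIV"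
  proof -
    have "(\<lambda>\<omega>. (Xvar fX \<omega>, snd (snd \<omega>))) \<in> N \<rightarrow>\<^sub>M (PiM UNIV (\<lambda>i. MX)) \<Otimes>\<^sub>M PW"
      using X_meas w_meas by (rule measurable_Pair)
    from measurable_comp[OF this pdef_meas] show ?thesis
      by (simp add: comp_def Lvar_def[abs_def])
  qed
  have U_meas: "(\<lambda>\<omega>. utility (Yvar fY (A \<omega>) \<omega>)) \<in> borel_measurable N"
    if A: "A \<in> N \<rightarrow>\<^sub>M count_space UNIV" for A :: "_ \<Rightarrow> 'i \<Rightarrow> 'l"
  proof -
    have "(\<lambda>\<omega>. of_bool (Yvar fY (A \<omega>) \<omega> i) :: real) \<in> borel_measurable N" for i
    proof -
      have fixed: "(\<lambda>\<omega>. fY (fst \<omega> i) (fst (snd \<omega>) (i, p i))) \<in> N \<rightarrow>\<^sub>M count_space UNIV" for p :: "'i \<Rightarrow> 'l"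
      proof -
        have "(\<lambda>\<omega>. (fst \<omega> i, fst (snd \<omega>) (i, p i))) \<in> N \<rightarrow>\<^sub>M PD \<Otimes>\<^sub>M MV"
          using d_meas v_meas by (rule measurable_Pair)
        from measurable_comp[OF this fY_meas] show ?thesis by (simp add: comp_def)
      qed
      have "(\<lambda>\<omega>. fY (fst \<omega> i) (fst (snd \<omega>) (i, A \<omega> i))) \<in> N \<rightarrow>\<^sub>M count_space UNIV"
        by (rule measurable_compose_countable'[where f="\<lambda>p \<omega>. fY (fst \<omega> i) (fst (snd \<omega>) (i, p i))" and I=UNIV]) (auto intro: fixed A)
      then have "(\<lambda>\<omega>. Yvar fY (A \<omega>) \<omega> i) \<in> N \<rightarrow>\<^sub>M count_space UNIV"
        by (simp add: Yvar_def)
      then show ?thesis by measurable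
    qed
    then show ?thesis unfolding utility_def by (intro borel_measurable_sum) auto
  qed
  have bound: "norm (utility y) \<le> real CARD('i)" for y :: "'i \<Rightarrow> bool"
  proof -
    have "0 \<le> utility y" unfolding utility_def by (intro sum_nonneg) auto
    moreover have "utility y \<le> (\<Sum>i\<in>(UNIV::'i::finite set). 1)" unfolding utility_def
      by (intro sum_mono) auto
    ultimately show ?thesis by simp
  qed
  have I1: "integrable N (\<lambda>\<omega>. utility (Yvar fY (pol (pred_matrix g (Xvar fX \<omega>))) \<omega>))"
    by (rule NP.integrable_const_bound[where B="real CARD('i)"]) (auto intro!: AE_I2 U_meas[OF A1] simp del: real_norm_def simp add: bound)
  have I2: "integrable N (\<lambda>\<omega>. utility (Yvar fY (Lvar fX pdef \<omega>) \<omega>))"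
    by (rule NP.integrable_const_bound[where B="real CARD('i)"]) (auto intro!: AE_I2 U_meas[OF A2] simp del: real_norm_def simp add: bound)
  have AE: "AE \<omega> in N. utility (Yvar fY (Lvar fX pdef \<omega>) \<omega>)
              \<le> utility (Yvar fY (pol (pred_matrix g (Xvar fX \<omega>))) \<omega>)"
    using pol_in_Pi unfolding N_def
  proof (rule AE_mp, intro AE_I2 impI)
    fix \<omega> assume h: "pol (pred_matrix g (Xvar fX \<omega>))
             \<in> Pi_set c (Xvar fX \<omega>) (Yvar fY (Lvar fX pdef \<omega>) \<omega>) (Lvar fX pdef \<omega>)"
    show "utility (Yvar fY (Lvar fX pdef \<omega>) \<omega>)
              \<le> utility (Yvar fY (pol (pred_matrix g (Xvar fX \<omega>))) \<omega>)"
      unfolding utility_def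
    proof (intro sum_mono)
      fix i
      show "of_bool (Yvar fY (Lvar fX pdef \<omega>) \<omega> i) \<le> (of_bool (Yvar fY (pol (pred_matrix g (Xvar fX \<omega>))) \<omega> i) :: real)"
        using h by (cases "Yvar fY (Lvar fX pdef \<omega>) \<omega> i") (auto simp: Pi_set_def Yvar_def)
    qed
  qed
  show ?thesis using integral_mono_AE[OF I2 I1 AE] by (simp add: N_def)
qed

end
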